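(* Assume $d>0$ and condition (L), and let $q>0$. For $T\in(0,\xi)$ let $\kappa_T$ be the maximal solution of $y'-y^2=-qr^2$ with $\kappa_T(T)=0$; it is defined on all of $(0,\xi)$. The family $(\kappa_T)_{T\in(0,\xi)}$ is increasing in $T$ (i.e. $\kappa_T\le\kappa_{T'}$ on $(0,\xi)$ for $T<T'$) and is bounded from above uniformly in $T$ by a finite function on $(0,\xi)$. Hence $w_q=\lim_{T\uparrow\xi}\kappa_T$ is well defined on $(0,\xi)$; moreover $w_q>0$ on $(0,\xi)$ and $\lim_{t\to\xi-}w_q(t)=0$.
   Context: Discrete setting. Fix $\rho>0$, $d\ge0$, $c>0$ and nonnegative reals $(\pi_k)_{k\ge1}$ with $\sum_k\pi_k=\rho$; $\bar\pi_k=\sum_{i\ge k}\pi_i$. Condition (L): $\sum_i\pi_i\log i<\infty$. $\psi(s)=d-(\rho+d)s+\sum_{i\ge1}\pi_is^{i+1}$, $m(s)=\int_s^1\frac{\psi(v)}{cv(1-v)}dv$ for $s\in(0,1]$, $\theta(s)=\int_s^1e^{m(v)}dv$, $\xi=\int_0^1e^{m(v)}dv\in(0,\infty]$, $\varphi:[0,\xi)\to(0,1]$ the inverse of $\theta$, and $r(s)=|\varphi'(s)|/\sqrt{c\varphi(s)(1-\varphi(s))}$ for $s\in(0,\xi)$. *)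

theory Defs
  imports "HOL-Analysis.Analysis"
begin

text \<open>The sequence (pi_k)_{k>=1} is a function pk :: nat => real of which only the
values at indices k >= 1 are used.\<close>

definition psi :: "real \<Rightarrow> real \<Rightarrow> (nat \<Rightarrow> real) \<Rightarrow> real \<Rightarrow> real" where
  "psi rho d pk s = d - (rho + d) * s + (\<Sum>i. pk (Suc i) * s ^ (Suc i + 1))"

definition mfun :: "real \<Rightarrow> real \<Rightarrow> real \<Rightarrow> (nat \<Rightarrow> real) \<Rightarrow> real \<Rightarrow> real" where
  "mfun rho d c pk s = integral {s..1} (\<lambda>v. psi rho d pk v / (c * v * (1 - v)))"

definition theta :: "real \<Rightarrow> real \<Rightarrow> real \<Rightarrow> (nat \<Rightarrow> real) \<Rightarrow> real \<Rightarrow> real" where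
  "theta rho d c pk s = integral {s..1} (\<lambda>v. exp (mfun rho d c pk v))"

definition xi :: "real \<Rightarrow> real \<Rightarrow> real \<Rightarrow> (nat \<Rightarrow> real) \<Rightarrow> ennreal" where
  "xi rho d c pk = (\<integral>\<^sup>+ v. ennreal (indicator {0<..1} v * exp (mfun rho d c pk v)) \<partial>lborel)"

definition Dom :: "real \<Rightarrow> real \<Rightarrow> real \<Rightarrow> (nat \<Rightarrow> real) \<Rightarrow> real set" where
  "Dom rho d c pk = {t. 0 < t \<and> ennreal t < xi rho d c pk}"

definition phi :: "real \<Rightarrow> real \<Rightarrow> real \<Rightarrow> (nat \<Rightarrow> real) \<Rightarrow> real \<Rightarrow> real" where
  "phi rho d c pk t = (THE s. s \<in> {0<..1} \<and> theta rho d c pk s = t)"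

definition rfun :: "real \<Rightarrow> real \<Rightarrow> real \<Rightarrow> (nat \<Rightarrow> real) \<Rightarrow> real \<Rightarrow> real" where
  "rfun rho d c pk t = \<bar>deriv (phi rho d c pk) t\<bar> /
      sqrt (c * phi rho d c pk t * (1 - phi rho d c pk t))"

definition to_xi :: "real \<Rightarrow> real \<Rightarrow> real \<Rightarrow> (nat \<Rightarrow> real) \<Rightarrow> real filter" where
  "to_xi rho d c pk = (if xi rho d c pk = \<infinity> then at_top else at_left (enn2real (xi rho d c pk)))"

definition riccati_sol :: "real \<Rightarrow> real \<Rightarrow> real \<Rightarrow> (nat \<Rightarrow> real) \<Rightarrow> real \<Rightarrow> real set \<Rightarrow> (real \<Rightarrow> real) \<Rightarrow> bool" where
  "riccati_sol rho d c pk q I y \<longleftrightarrow>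
     (\<forall>t\<in>I. (y has_real_derivative (y t ^ 2 - q * rfun rho d c pk t ^ 2)) (at t))"

end

theory Submission
  imports Defs "HOL-Real_Asymp.Real_Asymp"
begin


definition sint :: "real \<Rightarrow> real \<Rightarrow> (real \<Rightarrow> real) \<Rightarrow> real" where
  "sint T t f = (if T \<le> t then integral {T..t} f else - integral {t..T} f)"

lemma sint_eq:
  assumes "a \<le> T" "T \<le> b" "a \<le> t" "t \<le> b" "f integrable_on {a..b}"
  shows "sint T t f = integral {a..t} f - integral {a..T} f"
proof (cases "T \<le> t")
  case True
  have "integral {a..T} f + integral {T..t} f = integral {a..t} f"
    by (rule Henstock_Kurzweil_Integration.integral_combine) (use assms True in \<open>auto intro: integrable_subinterval_real\<close>)
  then show ?thesis using True by (simp add: sint_def)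
next
  case False
  have "integral {a..t} f + integral {t..T} f = integral {a..T} f"
    by (rule Henstock_Kurzweil_Integration.integral_combine) (use assms False in \<open>auto intro: integrable_subinterval_real\<close>)
  then show ?thesis using False by (simp add: sint_def)
qed

lemma interval_around:
  fixes I :: "real set"
  assumes "open I" "is_interval I" "x \<in> I" "y \<in> I"
  obtains a b where "a \<in> I" "b \<in> I" "a < min x y" "max x y < b" "{a..b} \<subseteq> I"
proof -
  have m: "min x y \<in> I" "max x y \<in> I" using assms by (auto simp: min_def max_def)
  obtain e1 where e1: "e1 > 0" "ball (min x y) e1 \<subseteq> I" using assms(1) m(1) open_contains_ball by blast
  obtain e2 where e2: "e2 > 0" "ball (max x y) e2 \<subseteq> I" using assms(1) m(2) open_contains_ball by blast
  define a where "a = min x y - e1/2"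
  define b where "b = max x y + e2/2"
  have aI: "a \<in> I" using e1 unfolding a_def by (auto simp: dist_real_def intro!: subsetD[OF e1(2)])
  have bI: "b \<in> I" using e2 unfolding b_def by (auto simp: dist_real_def intro!: subsetD[OF e2(2)])
  have "{a..b} \<subseteq> I"
  proof
    fix x assume "x \<in> {a..b}"
    then have "a \<le> x" "x \<le> b" by auto
    then show "x \<in> I" using aI bI assms(2) unfolding is_interval_1 by blast
  qed
  moreover have "a < min x y" "max x y < b" unfolding a_def b_def using e1 e2 by auto
  ultimately show ?thesis using that[OF aI bI] by blast
qed

lemma sint_deriv:
  assumes I: "open I" "is_interval I" and cf: "continuous_on I f" and T: "T \<in> I" and t: "t \<in> I"
  shows "((\<lambda>x. sint T x f) has_real_derivative f t) (at t)"
proof -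
  obtain a b where ab: "a \<in> I" "b \<in> I" "a < min T t" "max T t < b" "{a..b} \<subseteq> I"
    using interval_around[OF I T t] by blast
  have cf': "continuous_on {a..b} f" using continuous_on_subset[OF cf ab(5)] .
  have int: "f integrable_on {a..b}" by (rule integrable_continuous_real[OF cf'])
  have "((\<lambda>x. integral {a..x} f) has_vector_derivative f t) (at t within {a..b})"
    by (rule integral_has_vector_derivative[OF cf']) (use ab in auto)
  then have "((\<lambda>x. integral {a..x} f) has_real_derivative f t) (at t)"
    using ab by (simp add: has_real_derivative_iff_has_vector_derivative at_within_Icc_at)
  then have "((\<lambda>x. integral {a..x} f - integral {a..T} f) has_real_derivative f t) (at t)"
    using DERIV_diff[OF _ DERIV_const] by fastforce
  then show ?thesis
    by (rule has_field_derivative_transform_within_open[where S="{a<..<b}"])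
       (use ab sint_eq[OF _ _ _ _ int] in auto)
qed

lemma antideriv_exists:
  assumes I: "open I" "is_interval I" and cf: "continuous_on I f" and T: "T \<in> I"
  shows "\<exists>G. \<forall>x\<in>I. (G has_real_derivative f x) (at x)"
  using sint_deriv[OF I cf T] by blast

lemma sint_bound:
  assumes "continuous_on {min T t..max T t} f" "continuous_on {min T t..max T t} g"
    and "\<And>s. s \<in> {min T t..max T t} \<Longrightarrow> \<bar>f s\<bar> \<le> g s"
  shows "\<bar>sint T t f\<bar> \<le> integral {min T t..max T t} g"
proof (cases "T \<le> t")
  case True
  then show ?thesis using assms integral_norm_bound_integral[of f "{T..t}" g]
    by (auto simp: sint_def integrable_continuous_real min_def max_def)
next
  case False
  then show ?thesis using assms integral_norm_bound_integral[of f "{t..T}" g]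
    by (auto simp: sint_def integrable_continuous_real min_def max_def)
qed

lemma pow_aux: "real n * (y::real)^(n - Suc 0) * y = real n * y^n"
  by (cases n) auto

lemma pow_int:
  fixes T t :: real
  shows "integral {min T t..max T t} (\<lambda>s. \<bar>s - T\<bar>^n) = \<bar>t - T\<bar>^(Suc n) / Suc n"
proof (cases "T \<le> t")
  case True
  have "((\<lambda>s. \<bar>s - T\<bar>^n) has_integral ((t-T)^Suc n / Suc n - (T-T)^Suc n / Suc n)) {T..t}"
  proof (rule fundamental_theorem_of_calculus[OF True])
    fix x assume x: "x \<in> {T..t}"
    have "((\<lambda>s. (s-T)^Suc n / Suc n) has_real_derivative (real (Suc n) * ((1 - 0) * (x-T)^(Suc n - Suc 0))) / Suc n) (at x within {T..t})"
      by (intro DERIV_cdivide DERIV_power DERIV_diff DERIV_ident DERIV_const)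
    then have "((\<lambda>s. (s-T)^Suc n / Suc n) has_real_derivative (x - T)^n) (at x within {T..t})"
      by (simp del: of_nat_Suc)
    then show "((\<lambda>s. (s-T)^Suc n / Suc n) has_vector_derivative \<bar>x - T\<bar>^n) (at x within {T..t})"
      using x by (simp add: has_real_derivative_iff_has_vector_derivative)
  qed
  then have "integral {T..t} (\<lambda>s. \<bar>s - T\<bar>^n) = (t-T)^Suc n / Suc n" by (simp add: integral_unique)
  moreover have "min T t = T" "max T t = t" "\<bar>t - T\<bar> = t - T" using True by auto
  ultimately show ?thesis by simp
next
  case False
  define F where "F = (\<lambda>s::real. - ((T-s)^Suc n / Suc n))"
  have "((\<lambda>s. \<bar>s - T\<bar>^n) has_integral (F T - F t)) {t..T}"
  proof (rule fundamental_theorem_of_calculus)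
    show "t \<le> T" using False by simp
    fix x assume x: "x \<in> {t..T}"
    have "(F has_real_derivative - ((real (Suc n) * ((0 - 1) * (T-x)^(Suc n - Suc 0))) / Suc n)) (at x within {t..T})"
      unfolding F_def by (intro DERIV_minus DERIV_cdivide DERIV_power DERIV_diff DERIV_ident DERIV_const)
    then have "(F has_real_derivative (T - x)^n) (at x within {t..T})"
      by (simp del: of_nat_Suc)
    then show "(F has_vector_derivative \<bar>x - T\<bar>^n) (at x within {t..T})"
      using x by (simp add: has_real_derivative_iff_has_vector_derivative abs_minus_commute)
  qed
  then have "((\<lambda>s. \<bar>s - T\<bar>^n) has_integral ((T-t)^Suc n / Suc n)) {t..T}" by (simp add: F_def)
  then have "integral {t..T} (\<lambda>s. \<bar>s - T\<bar>^n) = (T-t)^Suc n / Suc n" by (simp add: integral_unique)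
  moreover have "min T t = t" "max T t = T" "\<bar>t - T\<bar> = T - t" using False by auto
  ultimately show ?thesis by simp
qed


lemma sint_same[simp]: "sint T T f = 0"
  by (simp add: sint_def)

lemma sint_nonneg1:
  assumes "T \<le> t" "continuous_on {T..t} f" "\<And>s. s \<in> {T..t} \<Longrightarrow> 0 \<le> f s"
  shows "0 \<le> sint T t f"
  unfolding sint_def using assms by (auto intro!: integral_nonneg integrable_continuous_real)

lemma sint_nonneg2:
  assumes "t \<le> T" "continuous_on {t..T} f" "\<And>s. s \<in> {t..T} \<Longrightarrow> f s \<le> 0"
  shows "0 \<le> sint T t f"
proof (cases "t = T")
  case False
  then have "integral {t..T} f \<le> integral {t..T} (\<lambda>s. 0)"
    using assms by (intro integral_le) (auto simp: integrable_continuous_real)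
  then show ?thesis using False assms by (simp add: sint_def)
qed simp

lemma sint_nonpos2:
  assumes "t \<le> T" "continuous_on {t..T} f" "\<And>s. s \<in> {t..T} \<Longrightarrow> 0 \<le> f s"
  shows "sint T t f \<le> 0"
proof (cases "t = T")
  case False
  then have "0 \<le> integral {t..T} f"
    using assms by (intro integral_nonneg) (auto simp: integrable_continuous_real)
  then show ?thesis using False assms by (simp add: sint_def)
qed simp

primrec PU :: "(real \<Rightarrow> real) \<Rightarrow> real \<Rightarrow> nat \<Rightarrow> (real \<Rightarrow> real) \<times> (real \<Rightarrow> real)" where
  "PU p T 0 = ((\<lambda>t. 1), (\<lambda>t. 0))"
| "PU p T (Suc n) = ((\<lambda>t. sint T t (snd (PU p T n))), (\<lambda>t. sint T t (\<lambda>s. p s * fst (PU p T n) s)))"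

locale ode_setup =
  fixes I :: "real set" and p :: "real \<Rightarrow> real" and T :: real
  assumes I_open: "open I" and I_int: "is_interval I"
    and p_cont: "continuous_on I p" and p_nonneg: "\<And>x. x \<in> I \<Longrightarrow> 0 \<le> p x"
    and T_in: "T \<in> I"
begin

abbreviation "U n \<equiv> fst (PU p T n)"
abbreviation "V n \<equiv> snd (PU p T n)"

lemma sub_I: "x \<in> I \<Longrightarrow> y \<in> I \<Longrightarrow> {x..y} \<subseteq> I"
proof
  fix z assume xy: "x \<in> I" "y \<in> I" and z: "z \<in> {x..y}"
  then have "x \<le> z" "z \<le> y" by auto
  then show "z \<in> I" using xy I_int unfolding is_interval_1 by blast
qed

lemma PU_cont: "continuous_on I (U n) \<and> continuous_on I (V n)"
proof (induction n)
  case 0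
  then show ?case by simp
next
  case (Suc n)
  have c1: "continuous_on I (\<lambda>s. p s * U n s)" using Suc p_cont by (intro continuous_intros) auto
  have "isCont (U (Suc n)) t" if "t \<in> I" for t
    using sint_deriv[OF I_open I_int conjunct2[OF Suc] T_in that] by (simp add: DERIV_isCont)
  moreover have "isCont (V (Suc n)) t" if "t \<in> I" for t
    using sint_deriv[OF I_open I_int c1 T_in that] by (simp add: DERIV_isCont)
  ultimately show ?case by (simp add: continuous_at_imp_continuous_on)
qed

lemma U_deriv: "t \<in> I \<Longrightarrow> (U (Suc n) has_real_derivative V n t) (at t)"
  using sint_deriv[OF I_open I_int conjunct2[OF PU_cont] T_in] by simp

lemma V_deriv: "t \<in> I \<Longrightarrow> (V (Suc n) has_real_derivative p t * U n t) (at t)"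
proof -
  assume t: "t \<in> I"
  have c1: "continuous_on I (\<lambda>s. p s * U n s)" using PU_cont p_cont by (intro continuous_intros) auto
  show ?thesis using sint_deriv[OF I_open I_int c1 T_in t] by simp
qed

lemma PU_sign: "t \<in> I \<Longrightarrow> 0 \<le> U n t \<and> (T \<le> t \<longrightarrow> 0 \<le> V n t) \<and> (t \<le> T \<longrightarrow> V n t \<le> 0)"
proof (induction n arbitrary: t)
  case 0
  then show ?case by simp
next
  case (Suc n)
  have sub1: "{T..t} \<subseteq> I" "{t..T} \<subseteq> I" using sub_I[OF T_in Suc.prems] sub_I[OF Suc.prems T_in] by auto
  have cV: "continuous_on {T..t} (V n)" "continuous_on {t..T} (V n)"
    using continuous_on_subset[OF conjunct2[OF PU_cont] sub1(1)] continuous_on_subset[OF conjunct2[OF PU_cont] sub1(2)] by auto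
  have c1: "continuous_on I (\<lambda>s. p s * U n s)" using PU_cont p_cont by (intro continuous_intros) auto
  have cW: "continuous_on {T..t} (\<lambda>s. p s * U n s)" "continuous_on {t..T} (\<lambda>s. p s * U n s)"
    using continuous_on_subset[OF c1 sub1(1)] continuous_on_subset[OF c1 sub1(2)] by auto
  have W0: "0 \<le> p s * U n s" if "s \<in> I" for s using Suc.IH[OF that] p_nonneg[OF that] by simp
  have A: "0 \<le> U (Suc n) t"
  proof (cases "T \<le> t")
    case True
    have "0 \<le> V n s" if "s \<in> {T..t}" for s using Suc.IH[OF subsetD[OF sub1(1) that]] that by auto
    then show ?thesis using sint_nonneg1[OF True cV(1)] by auto
  next
    case False
    then have "t \<le> T" by simp
    have "V n s \<le> 0" if "s \<in> {t..T}" for s using Suc.IH[OF subsetD[OF sub1(2) that]] that by auto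
    then show ?thesis using sint_nonneg2[OF \<open>t \<le> T\<close> cV(2)] by auto
  qed
  have B: "T \<le> t \<longrightarrow> 0 \<le> V (Suc n) t"
  proof
    assume Tt: "T \<le> t"
    have "0 \<le> p s * U n s" if "s \<in> {T..t}" for s using W0[OF subsetD[OF sub1(1) that]] .
    then have "0 \<le> sint T t (\<lambda>s. p s * U n s)" by (rule sint_nonneg1[OF Tt cW(1)])
    then show "0 \<le> V (Suc n) t" by simp
  qed
  have C: "t \<le> T \<longrightarrow> V (Suc n) t \<le> 0"
  proof
    assume Tt: "t \<le> T"
    have "0 \<le> p s * U n s" if "s \<in> {t..T}" for s using W0[OF subsetD[OF sub1(2) that]] .
    then have "sint T t (\<lambda>s. p s * U n s) \<le> 0" by (rule sint_nonpos2[OF Tt cW(2)])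
    then show "V (Suc n) t \<le> 0" by simp
  qed
  show ?case using A B C by simp
qed

lemma PU_bound:
  assumes ab: "{a..b} \<subseteq> I" "T \<in> {a..b}" and C: "1 \<le> C" "\<And>x. x \<in> {a..b} \<Longrightarrow> p x \<le> C"
  shows "t \<in> {a..b} \<Longrightarrow> \<bar>U n t\<bar> \<le> C^n * \<bar>t - T\<bar>^n / fact n \<and> \<bar>V n t\<bar> \<le> C^n * \<bar>t - T\<bar>^n / fact n"
proof (induction n arbitrary: t)
  case 0
  then show ?case by simp
next
  case (Suc n)
  have sub: "{min T t..max T t} \<subseteq> {a..b}" using Suc.prems ab(2) by auto
  have sub': "{min T t..max T t} \<subseteq> I" using sub ab(1) by (rule subset_trans)
  have cV: "continuous_on {min T t..max T t} (V n)"
    using continuous_on_subset[OF conjunct2[OF PU_cont] sub'] .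
  have c1: "continuous_on I (\<lambda>s. p s * U n s)" using PU_cont p_cont by (intro continuous_intros) auto
  have cW: "continuous_on {min T t..max T t} (\<lambda>s. p s * U n s)"
    using continuous_on_subset[OF c1 sub'] .
  have cg: "continuous_on {min T t..max T t} (\<lambda>s. K * \<bar>s - T\<bar>^n)" for K :: real
    by (intro continuous_intros)
  have int_g: "integral {min T t..max T t} (\<lambda>s. K * \<bar>s - T\<bar>^n) = K * (\<bar>t - T\<bar>^Suc n / Suc n)" for K :: real
    using pow_int[of T t n] by simp
  have fact_eq: "(C^n / fact n) * (\<bar>t - T\<bar>^Suc n / Suc n) = C^n * \<bar>t - T\<bar>^Suc n / fact (Suc n)"
    by (simp only: fact_Suc of_nat_fact times_divide_eq_left times_divide_eq_right divide_divide_eq_left mult.commute)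
  have Cpow: "C^n \<le> C^Suc n" using C(1) by simp
  have le1: "C^n * \<bar>t - T\<bar>^Suc n / fact (Suc n) \<le> C^Suc n * \<bar>t - T\<bar>^Suc n / fact (Suc n)"
    using Cpow by (intro divide_right_mono mult_right_mono) auto
  have A: "\<bar>U (Suc n) t\<bar> \<le> C^Suc n * \<bar>t - T\<bar>^Suc n / fact (Suc n)"
  proof -
    have "\<bar>U (Suc n) t\<bar> \<le> integral {min T t..max T t} (\<lambda>s. (C^n / fact n) * \<bar>s - T\<bar>^n)"
    proof -
      have "\<bar>V n s\<bar> \<le> (C^n / fact n) * \<bar>s - T\<bar>^n" if "s \<in> {min T t..max T t}" for s
        using Suc.IH[OF subsetD[OF sub that]] by simp
      then show ?thesis by (simp only: PU.simps fst_conv) (intro sint_bound[OF cV cg], auto)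
    qed
    also have "\<dots> = C^n * \<bar>t - T\<bar>^Suc n / fact (Suc n)" by (simp only: int_g fact_eq)
    finally show ?thesis using le1 by linarith
  qed
  have B: "\<bar>V (Suc n) t\<bar> \<le> C^Suc n * \<bar>t - T\<bar>^Suc n / fact (Suc n)"
  proof -
    have pt: "\<bar>p s * U n s\<bar> \<le> (C^Suc n / fact n) * \<bar>s - T\<bar>^n" if s: "s \<in> {min T t..max T t}" for s
    proof -
      have "s \<in> {a..b}" "s \<in> I" using subsetD[OF sub s] subsetD[OF sub' s] by auto
      then have "\<bar>p s\<bar> \<le> C" "0 \<le> p s" using C(2) p_nonneg by auto
      moreover have "\<bar>U n s\<bar> \<le> C^n * \<bar>s - T\<bar>^n / fact n" using Suc.IH[OF \<open>s \<in> {a..b}\<close>] by simp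
      ultimately have "\<bar>p s\<bar> * \<bar>U n s\<bar> \<le> C * (C^n * \<bar>s - T\<bar>^n / fact n)"
        by (intro mult_mono) auto
      then show ?thesis by (simp add: abs_mult)
    qed
    have "\<bar>V (Suc n) t\<bar> \<le> integral {min T t..max T t} (\<lambda>s. (C^Suc n / fact n) * \<bar>s - T\<bar>^n)"
      using pt by (simp only: PU.simps snd_conv) (intro sint_bound[OF cW cg], auto)
    also have "\<dots> = C^Suc n * \<bar>t - T\<bar>^Suc n / fact (Suc n)"
    proof -
      have "(C^Suc n / fact n) * (\<bar>t - T\<bar>^Suc n / Suc n) = C^Suc n * \<bar>t - T\<bar>^Suc n / fact (Suc n)"
        by (simp only: fact_Suc of_nat_fact times_divide_eq_left times_divide_eq_right divide_divide_eq_left mult.commute)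
      then show ?thesis by (simp only: int_g)
    qed
    finally show ?thesis .
  qed
  show ?case using A B by simp
qed


lemma V_T: "V n T = 0"
  by (cases n) simp_all

lemma exists_uv:
  "\<exists>u v. (\<forall>t\<in>I. (u has_real_derivative v t) (at t) \<and> (v has_real_derivative p t * u t) (at t) \<and> 1 \<le> u t) \<and> v T = 0"
proof -
  define u where "u x = (\<Sum>n. U n x)" for x
  define v where "v x = (\<Sum>n. V n x)" for x
  have main: "(u has_real_derivative v t) (at t) \<and> (v has_real_derivative p t * u t) (at t) \<and> 1 \<le> u t"
    if t: "t \<in> I" for t
  proof -
    obtain a b where ab: "a \<in> I" "b \<in> I" "a < min T t" "max T t < b" "{a..b} \<subseteq> I"
      using interval_around[OF I_open I_int T_in t] by blast
    have "bounded (p ` {a..b})"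
      by (intro compact_imp_bounded compact_continuous_image continuous_on_subset[OF p_cont ab(5)]) auto
    then obtain B where B0: "\<forall>x\<in>{a..b}. \<bar>p x\<bar> \<le> B" unfolding bounded_iff by auto
    then have B: "\<And>x. x \<in> {a..b} \<Longrightarrow> \<bar>p x\<bar> \<le> B" by blast
    define C where "C = max 1 B"
    have C1: "1 \<le> C" and pC: "\<And>x. x \<in> {a..b} \<Longrightarrow> p x \<le> C" unfolding C_def using B by force+
    define L where "L = b - a"
    have L0: "0 \<le> L" using ab unfolding L_def by simp
    have TL: "\<bar>x - T\<bar> \<le> L" if "x \<in> {a..b}" for x using that ab unfolding L_def by auto
    define M where "M n = C^n * L^n / fact n" for n
    have M_sum: "summable M"
    proof -
      have "summable (\<lambda>n. inverse (fact n) * (C * L)^n)" by (rule summable_exp)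
      moreover have "(\<lambda>n. inverse (fact n) * (C * L)^n) = M"
        by (rule ext) (simp add: M_def power_mult_distrib divide_inverse mult.commute)
      ultimately show ?thesis by simp
    qed
    have M0: "0 \<le> M n" for n using C1 L0 unfolding M_def by simp
    have bnd: "\<bar>U n x\<bar> \<le> M n \<and> \<bar>V n x\<bar> \<le> M n" if x: "x \<in> {a..b}" for n x
    proof -
      have Tab: "T \<in> {a..b}" using ab by auto
      have "\<bar>x - T\<bar>^n \<le> L^n" using TL[OF x] by (intro power_mono) auto
      then have "C^n * \<bar>x - T\<bar>^n / fact n \<le> M n" unfolding M_def using C1
        by (intro divide_right_mono mult_left_mono) auto
      then show ?thesis using PU_bound[OF ab(5) Tab C1 pC x, of n] by linarith
    qed
    define f' where "f' n x = (case n of 0 \<Rightarrow> 0 | Suc k \<Rightarrow> V k x)" for n x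
    define g' where "g' n x = (case n of 0 \<Rightarrow> 0 | Suc k \<Rightarrow> p x * U k x)" for n x
    define M' where "M' n = (case n of 0 \<Rightarrow> 0 | Suc k \<Rightarrow> C * M k)" for n
    have M'_sum: "summable M'"
    proof -
      have "summable (\<lambda>n. M' (Suc n))" unfolding M'_def using summable_mult[OF M_sum, of C] by simp
      then show ?thesis by (simp add: summable_Suc_iff)
    qed
    have f'b: "norm (f' n x) \<le> M' n" if "x \<in> {a..b}" for n x
    proof (cases n)
      case (Suc k)
      have "\<bar>V k x\<bar> \<le> M k" using bnd[OF that] by simp
      also have "M k \<le> C * M k" using C1 M0[of k] by (simp add: mult_le_cancel_right1)
      finally show ?thesis using Suc by (simp add: f'_def M'_def)
    qed (simp add: f'_def M'_def)
    have g'b: "norm (g' n x) \<le> M' n" if x: "x \<in> {a..b}" for n x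
    proof (cases n)
      case (Suc k)
      have "x \<in> I" using x ab(5) by auto
      then have "\<bar>p x\<bar> \<le> C" using pC[OF x] p_nonneg by simp
      moreover have "\<bar>U k x\<bar> \<le> M k" using bnd[OF x] by simp
      ultimately have "\<bar>p x\<bar> * \<bar>U k x\<bar> \<le> C * M k" by (intro mult_mono) auto
      then show ?thesis using Suc by (simp add: g'_def M'_def abs_mult)
    qed (simp add: g'_def M'_def)
    have tS: "t \<in> {a..b}" and tint: "t \<in> interior {a..b}" using ab by auto
    have sumU: "summable (\<lambda>n. U n t)"
      by (rule summable_comparison_test'[OF M_sum]) (use bnd[OF tS] in auto)
    have sumV: "summable (\<lambda>n. V n t)"
      by (rule summable_comparison_test'[OF M_sum]) (use bnd[OF tS] in auto)
    have uc1: "uniformly_convergent_on {a..b} (\<lambda>n x. \<Sum>i<n. f' i x)"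
      unfolding uniformly_convergent_on_def
      by (rule exI, rule Weierstrass_m_test_ev[OF _ M'_sum]) (use f'b in auto)
    have uc2: "uniformly_convergent_on {a..b} (\<lambda>n x. \<Sum>i<n. g' i x)"
      unfolding uniformly_convergent_on_def
      by (rule exI, rule Weierstrass_m_test_ev[OF _ M'_sum]) (use g'b in auto)
    have dU: "(U n has_field_derivative f' n x) (at x within {a..b})" if "x \<in> {a..b}" for n x
    proof (cases n)
      case 0 then show ?thesis by (simp add: f'_def)
    next
      case (Suc k)
      have "x \<in> I" using that ab(5) by auto
      then show ?thesis using U_deriv[of x k] Suc by (simp add: f'_def has_field_derivative_at_within)
    qed
    have dV: "(V n has_field_derivative g' n x) (at x within {a..b})" if "x \<in> {a..b}" for n x
    proof (cases n)
      case 0 then show ?thesis by (simp add: g'_def)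
    next
      case (Suc k)
      have "x \<in> I" using that ab(5) by auto
      then show ?thesis using V_deriv[of x k] Suc by (simp add: g'_def has_field_derivative_at_within)
    qed
    have D1: "((\<lambda>x. \<Sum>n. U n x) has_field_derivative (\<Sum>n. f' n t)) (at t)"
      by (rule has_field_derivative_series'(2)[OF convex_box(1)[of a b, unfolded box_real] dU uc1 tS sumU tint]) simp_all
    have D2: "((\<lambda>x. \<Sum>n. V n x) has_field_derivative (\<Sum>n. g' n t)) (at t)"
      by (rule has_field_derivative_series'(2)[OF convex_box(1)[of a b, unfolded box_real] dV uc2 tS sumV tint]) simp_all
    have sf': "summable (\<lambda>n. f' n t)"
      by (rule summable_comparison_test'[OF M'_sum]) (use f'b[OF tS] in auto)
    have sg': "summable (\<lambda>n. g' n t)"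
      by (rule summable_comparison_test'[OF M'_sum]) (use g'b[OF tS] in auto)
    have e1: "(\<Sum>n. f' n t) = v t"
      using suminf_split_head[OF sf'] by (simp add: f'_def v_def)
    have e2: "(\<Sum>n. g' n t) = p t * u t"
      using suminf_split_head[OF sg'] suminf_mult[OF sumU, of "p t"] by (simp add: g'_def u_def)
    have "(\<Sum>n. U (Suc n) t) = u t - U 0 t" using suminf_split_head[OF sumU] by (simp add: u_def)
    moreover have "0 \<le> (\<Sum>n. U (Suc n) t)"
    proof (rule suminf_nonneg)
      show "summable (\<lambda>n. U (Suc n) t)" using sumU summable_Suc_iff[of "\<lambda>n. U n t"] by blast
      show "0 \<le> U (Suc n) t" for n using PU_sign[OF t, of "Suc n"] by blast
    qed
    ultimately have "1 \<le> u t" by simp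
    then show ?thesis using D1 D2 e1 e2 unfolding u_def[abs_def] v_def[abs_def] by simp
  qed
  have "v T = 0" unfolding v_def by (simp add: V_T)
  then show ?thesis using main by blast
qed

lemma exists_riccati:
  "\<exists>y. (\<forall>t\<in>I. (y has_real_derivative (y t ^ 2 - p t)) (at t)) \<and> y T = 0"
proof -
  obtain u v where uv: "\<And>t. t \<in> I \<Longrightarrow> (u has_real_derivative v t) (at t)"
    "\<And>t. t \<in> I \<Longrightarrow> (v has_real_derivative p t * u t) (at t)" "\<And>t. t \<in> I \<Longrightarrow> 1 \<le> u t"
    and vT: "v T = 0"
    using exists_uv by blast
  define y where "y t = - (v t / u t)" for t
  have "(y has_real_derivative (y t ^ 2 - p t)) (at t)" if t: "t \<in> I" for t
  proof -
    have u0: "u t \<noteq> 0" using uv(3)[OF t] by simp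
    have "((\<lambda>x. - (v x / u x)) has_real_derivative - (((p t * u t) * u t - v t * v t) / (u t * u t))) (at t)"
      by (intro DERIV_minus DERIV_divide uv(1,2)[OF t] u0)
    moreover have "- (((p t * u t) * u t - v t * v t) / (u t * u t)) = y t ^ 2 - p t"
      using u0 by (simp add: y_def field_simps power2_eq_square)
    ultimately show ?thesis unfolding y_def[abs_def] by simp
  qed
  moreover have "y T = 0" by (simp add: y_def vT)
  ultimately show ?thesis by blast
qed

end

locale ric_setup =
  fixes I :: "real set" and p :: "real \<Rightarrow> real"
  assumes I_open: "open I" and I_int: "is_interval I"
    and p_pos: "\<And>x. x \<in> I \<Longrightarrow> 0 < p x"
begin

definition "sol y \<longleftrightarrow> (\<forall>t\<in>I. (y has_real_derivative (y t ^ 2 - p t)) (at t))"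

lemma sub_I: "x \<in> I \<Longrightarrow> y \<in> I \<Longrightarrow> {x..y} \<subseteq> I"
proof
  fix z assume xy: "x \<in> I" "y \<in> I" and z: "z \<in> {x..y}"
  then have "x \<le> z" "z \<le> y" by auto
  then show "z \<in> I" using xy I_int unfolding is_interval_1 by blast
qed

lemma sol_cont: "sol y \<Longrightarrow> continuous_on I y"
  unfolding sol_def by (meson DERIV_isCont continuous_at_imp_continuous_on)

lemma antideriv: "continuous_on I f \<Longrightarrow> T \<in> I \<Longrightarrow> \<exists>G. \<forall>x\<in>I. (G has_real_derivative f x) (at x)"
  using antideriv_exists[OF I_open I_int] by blast

lemma sol_sign:
  assumes y: "sol y" and T: "T \<in> I" "y T = 0" and t: "t \<in> I"
  shows "T < t \<Longrightarrow> y t < 0" and "t < T \<Longrightarrow> 0 < y t"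
proof -
  obtain G where G: "\<And>x. x \<in> I \<Longrightarrow> (G has_real_derivative y x) (at x)"
    using antideriv[OF sol_cont[OF y] T(1)] by blast
  define z where "z x = y x * exp (- G x)" for x
  have dz: "(z has_real_derivative - p x * exp (- G x)) (at x)" if x: "x \<in> I" for x
  proof -
    have "(z has_real_derivative (y x ^ 2 - p x) * exp (- G x) + exp (- G x) * (- y x) * y x) (at x)"
      unfolding z_def[abs_def]
      using DERIV_mult[OF y[unfolded sol_def, rule_format, OF x] DERIV_chain2[OF DERIV_exp DERIV_minus[OF G[OF x]]]] .
    then show ?thesis by (simp add: algebra_simps power2_eq_square)
  qed
  have neg: "- p x * exp (- G x) < 0" if "x \<in> I" for x using p_pos[OF that] by simp
  show "y t < 0" if "T < t"
  proof -
    have "z t < z T"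
    proof (rule DERIV_neg_imp_decreasing[OF that])
      fix x assume "T \<le> x" "x \<le> t"
      then have x: "x \<in> I" using sub_I[OF T(1) t] by auto
      show "\<exists>d. (z has_real_derivative d) (at x) \<and> d < 0" using dz[OF x] neg[OF x] by blast
    qed
    then show ?thesis using T(2) unfolding z_def by (simp add: mult_less_0_iff)
  qed
  show "0 < y t" if "t < T"
  proof -
    have "z T < z t"
    proof (rule DERIV_neg_imp_decreasing[OF that])
      fix x assume "t \<le> x" "x \<le> T"
      then have x: "x \<in> I" using sub_I[OF t T(1)] by auto
      show "\<exists>d. (z has_real_derivative d) (at x) \<and> d < 0" using dz[OF x] neg[OF x] by blast
    qed
    then show ?thesis using T(2) unfolding z_def by (simp add: zero_less_mult_iff)
  qed
qed

lemma sol_compare: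
  assumes y1: "sol y1" and y2: "sol y2" and T1: "T1 \<in> I" "y1 T1 = 0" and T2: "T2 \<in> I" "y2 T2 = 0"
    and lt: "T1 < T2" and t: "t \<in> I"
  shows "y1 t < y2 t"
proof -
  have c: "continuous_on I (\<lambda>x. y1 x + y2 x)" using sol_cont[OF y1] sol_cont[OF y2] by (intro continuous_intros)
  obtain G where G: "\<And>x. x \<in> I \<Longrightarrow> (G has_real_derivative y1 x + y2 x) (at x)"
    using antideriv[OF c T1(1)] by blast
  define z where "z x = (y2 x - y1 x) * exp (- G x)" for x
  have dz: "(z has_real_derivative 0) (at x within I)" if x: "x \<in> I" for x
  proof -
    have "(z has_real_derivative ((y2 x ^ 2 - p x) - (y1 x ^ 2 - p x)) * exp (- G x) + exp (- G x) * (- (y1 x + y2 x)) * (y2 x - y1 x)) (at x)"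
      unfolding z_def[abs_def]
      using DERIV_mult[OF DERIV_diff[OF y2[unfolded sol_def, rule_format, OF x] y1[unfolded sol_def, rule_format, OF x]] DERIV_chain2[OF DERIV_exp DERIV_minus[OF G[OF x]]]] .
    then have "(z has_real_derivative 0) (at x)" by (simp add: algebra_simps power2_eq_square)
    then show ?thesis by (rule has_field_derivative_at_within)
  qed
  obtain k where k: "\<And>x. x \<in> I \<Longrightarrow> z x = k"
    using has_field_derivative_zero_constant[OF is_interval_convex[OF I_int] dz] by blast
  have "y1 T2 < 0" using sol_sign(1)[OF y1 T1 T2(1) lt] .
  then have "0 < z T2" unfolding z_def using T2 by (simp add: mult_neg_pos)
  then have "0 < z t" using k[OF t] k[OF T2(1)] by simp
  then show ?thesis unfolding z_def by (simp add: zero_less_mult_iff)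
qed

lemma sol_super:
  assumes y: "sol y" and T: "T \<in> I" "y T = 0" and t: "t \<in> I"
    and h: "\<And>x. x \<in> I \<Longrightarrow> \<exists>h'. (h has_real_derivative h') (at x) \<and> h' \<le> - p x"
    and h0: "\<And>x. x \<in> I \<Longrightarrow> 0 \<le> h x"
  shows "y t \<le> h t"
proof (cases "T < t")
  case True
  then show ?thesis using sol_sign(1)[OF y T t] h0[OF t] by simp
next
  case False
  then have tT: "t \<le> T" by simp
  have "(\<lambda>x. h x - y x) T \<le> (\<lambda>x. h x - y x) t"
  proof (rule DERIV_nonpos_imp_nonincreasing[OF tT])
    fix x assume "t \<le> x" "x \<le> T"
    then have x: "x \<in> I" using sub_I[OF t T(1)] by auto
    obtain h' where h': "(h has_real_derivative h') (at x)" "h' \<le> - p x" using h[OF x] by blast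
    have "((\<lambda>x. h x - y x) has_real_derivative h' - (y x ^ 2 - p x)) (at x)"
      by (intro DERIV_diff h'(1) y[unfolded sol_def, rule_format] x)
    moreover have "h' - (y x ^ 2 - p x) \<le> 0"
      using h'(2) zero_le_power2[of "y x"] by linarith
    ultimately show "\<exists>d. ((\<lambda>x. h x - y x) has_real_derivative d) (at x) \<and> d \<le> 0" by blast
  qed
  then show ?thesis using T(2) h0[OF T(1)] by simp
qed

end



definition Sf :: "(nat \<Rightarrow> real) \<Rightarrow> real \<Rightarrow> real" where
  "Sf pk v = (\<Sum>i. pk (Suc i) * (\<Sum>j\<le>i. v^j))"

definition Fk :: "(nat \<Rightarrow> real) \<Rightarrow> nat \<Rightarrow> real \<Rightarrow> real" where
  "Fk pk k v = (\<Sum>i<k. pk (Suc i) * (\<Sum>j\<le>i. v^j))"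

lemma geom_sum: "(1 - v) * (\<Sum>j\<le>i. v^j) = 1 - (v::real)^Suc i"
proof (induction i)
  case 0
  then show ?case by simp
next
  case (Suc i)
  have "(1 - v) * (\<Sum>j\<le>Suc i. v^j) = (1 - v) * (\<Sum>j\<le>i. v^j) + (1 - v) * v^Suc i"
    by (simp add: distrib_left)
  also have "\<dots> = 1 - v^Suc i + (1 - v) * v^Suc i" using Suc.IH by simp
  also have "\<dots> = 1 - v^Suc (Suc i)" by (simp add: algebra_simps)
  finally show ?case .
qed

lemma harm_bound: "(\<Sum>j\<le>i. 1 / real (Suc j)) \<le> 1 + ln (real (Suc i))"
proof (induction i)
  case 0
  then show ?case by simp
next
  case (Suc i)
  have a: "ln ((real (Suc i)) / real (Suc (Suc i))) \<le> real (Suc i) / real (Suc (Suc i)) - 1"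
    by (rule ln_le_minus_one) simp
  have b: "ln ((real (Suc i)) / real (Suc (Suc i))) = ln (real (Suc i)) - ln (real (Suc (Suc i)))"
    by (simp add: ln_div)
  have c: "real (Suc i) / real (Suc (Suc i)) - 1 = - (1 / real (Suc (Suc i)))"
    by (simp add: field_simps)
  have "(\<Sum>j\<le>Suc i. 1 / real (Suc j)) = (\<Sum>j\<le>i. 1 / real (Suc j)) + 1 / real (Suc (Suc i))"
    by simp
  also have "\<dots> \<le> 1 + ln (real (Suc (Suc i)))" using Suc a b c by linarith
  finally show ?case .
qed

lemma pow_has_integral:
  assumes "s \<le> 1"
  shows "((\<lambda>v::real. v^j) has_integral (1 - s^Suc j) / Suc j) {s..1}"
proof -
  define F where "F = (\<lambda>v::real. v^Suc j / Suc j)"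
  have "((\<lambda>v::real. v^j) has_integral (F 1 - F s)) {s..1}"
  proof (rule fundamental_theorem_of_calculus[OF assms])
    fix x assume x: "x \<in> {s..1}"
    have "(F has_real_derivative (real (Suc j) * (1 * x^(Suc j - Suc 0))) / Suc j) (at x within {s..1})"
      unfolding F_def by (intro DERIV_cdivide DERIV_power DERIV_ident)
    then show "(F has_vector_derivative x^j) (at x within {s..1})"
      by (simp add: has_real_derivative_iff_has_vector_derivative del: of_nat_Suc)
  qed
  then show ?thesis by (simp add: F_def diff_divide_distrib)
qed

lemma aux_ival: "\<bar>z - s\<bar> \<le> min (s/2) ((1-s)/2) \<Longrightarrow> 0 < s \<Longrightarrow> s < 1 \<Longrightarrow> 0 < z \<and> z < (1::real)"
  by (auto simp: abs_le_iff min_def split: if_splits)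

locale setting =
  fixes rho d c :: real and pk :: "nat \<Rightarrow> real"
  assumes rho_pos: "rho > 0" and d_pos: "d > 0" and c_pos: "c > 0"
    and pi_nonneg: "\<And>k. k \<ge> 1 \<Longrightarrow> pk k \<ge> 0"
    and pi_sums: "(\<lambda>i. pk (Suc i)) sums rho"
    and condL: "summable (\<lambda>i. pk (Suc i) * ln (real (Suc i)))"
begin

lemma pi_nn: "0 \<le> pk (Suc i)" using pi_nonneg by simp

definition "Ib = rho + (\<Sum>i. pk (Suc i) * ln (real (Suc i)))"

lemma piv_summable:
  assumes "0 \<le> v" "v \<le> 1"
  shows "summable (\<lambda>i. pk (Suc i) * v^Suc i)"
proof (rule summable_comparison_test'[OF sums_summable[OF pi_sums]])
  fix n
  have "v^Suc n \<le> 1" by (rule power_le_one[OF assms])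
  then have "pk (Suc n) * v^Suc n \<le> pk (Suc n)" using pi_nn[of n] by (simp add: mult_left_le)
  then show "norm (pk (Suc n) * v^Suc n) \<le> pk (Suc n)" using pi_nn[of n] assms by simp
qed

lemma S_sums:
  assumes "0 \<le> v" "v < 1"
  shows "(\<lambda>i. pk (Suc i) * (\<Sum>j\<le>i. v^j)) sums ((rho - (\<Sum>i. pk (Suc i) * v^Suc i)) / (1 - v))"
proof -
  have "(\<lambda>i. (pk (Suc i) - pk (Suc i) * v^Suc i) / (1 - v)) sums ((rho - (\<Sum>i. pk (Suc i) * v^Suc i)) / (1 - v))"
    by (intro sums_divide sums_diff pi_sums summable_sums piv_summable) (use assms in auto)
  moreover have "(pk (Suc i) - pk (Suc i) * v^Suc i) / (1 - v) = pk (Suc i) * (\<Sum>j\<le>i. v^j)" for i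
  proof -
    have "(1 - v) * (\<Sum>j\<le>i. v^j) = 1 - v^Suc i" by (rule geom_sum)
    then have "(\<Sum>j\<le>i. v^j) = (1 - v^Suc i) / (1 - v)" using assms by (simp add: field_simps)
    then show ?thesis by (simp add: right_diff_distrib)
  qed
  ultimately show ?thesis by simp
qed

lemma Sf_eq: "0 \<le> v \<Longrightarrow> v < 1 \<Longrightarrow> Sf pk v = (rho - (\<Sum>i. pk (Suc i) * v^Suc i)) / (1 - v)"
  unfolding Sf_def using S_sums sums_unique by metis

lemma Sf_nonneg: "0 \<le> v \<Longrightarrow> v < 1 \<Longrightarrow> 0 \<le> Sf pk v"
  unfolding Sf_def using S_sums pi_nn
  by (intro suminf_nonneg) (auto intro!: sums_summable mult_nonneg_nonneg sum_nonneg)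

lemma psi_eq:
  assumes "0 < v" "v < 1"
  shows "psi rho d pk v = (1 - v) * (d - v * Sf pk v)"
proof -
  define Q where "Q = (\<Sum>i. pk (Suc i) * v^Suc i)"
  have sQ: "summable (\<lambda>i. pk (Suc i) * v^Suc i)" using piv_summable assms by simp
  have "(\<Sum>i. pk (Suc i) * v ^ (Suc i + 1)) = (\<Sum>i. v * (pk (Suc i) * v^Suc i))"
    by (simp add: algebra_simps)
  also have "\<dots> = v * Q" unfolding Q_def by (rule suminf_mult[OF sQ])
  finally have e: "(\<Sum>i. pk (Suc i) * v ^ (Suc i + 1)) = v * Q" .
  have "Sf pk v = (rho - Q) / (1 - v)" unfolding Q_def using Sf_eq assms by simp
  then have h: "Sf pk v * (1 - v) = rho - Q" using assms by simp
  have "(1 - v) * (d - v * Sf pk v) = (1-v)*d - v * (Sf pk v * (1 - v))" by (simp add: algebra_simps)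
  also have "\<dots> = (1 - v) * d - v * (rho - Q)" using h by simp
  also have "\<dots> = d - (rho + d) * v + v * Q" by (simp add: algebra_simps)
  also have "\<dots> = psi rho d pk v" unfolding psi_def e by simp
  finally show ?thesis by simp
qed

lemma f_eq:
  assumes "0 < v" "v < 1"
  shows "psi rho d pk v / (c * v * (1 - v)) = d / (c * v) - Sf pk v / c"
proof -
  have "psi rho d pk v / (c * v * (1 - v)) = (d - v * Sf pk v) / (c * v)"
    using psi_eq[OF assms] assms by simp
  also have "\<dots> = d / (c * v) - Sf pk v / c" using assms c_pos by (simp add: field_simps)
  finally show ?thesis .
qed

lemma Ib_bound: "(\<Sum>i<k. pk (Suc i) * (1 + ln (real (Suc i)))) \<le> Ib"
proof -
  have sm: "(\<lambda>i. pk (Suc i) * (1 + ln (real (Suc i)))) sums Ib"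
    unfolding Ib_def distrib_left using sums_add[OF pi_sums summable_sums[OF condL]] by simp
  show ?thesis
    by (rule sum_le_suminf[OF sums_summable[OF sm], unfolded sums_unique[OF sm, symmetric]])
       (auto intro!: mult_nonneg_nonneg pi_nn)
qed

lemma Fk_has_integral:
  assumes "s \<le> 1"
  shows "(Fk pk k has_integral (\<Sum>i<k. pk (Suc i) * (\<Sum>j\<le>i. (1 - s^Suc j) / Suc j))) {s..1}"
  unfolding Fk_def
  by (intro has_integral_sum has_integral_mult_right pow_has_integral assms) auto

lemma Fk_int_bound:
  assumes "0 \<le> s" "s \<le> 1"
  shows "0 \<le> (\<Sum>i<k. pk (Suc i) * (\<Sum>j\<le>i. (1 - s^Suc j) / Suc j))"
    and "(\<Sum>i<k. pk (Suc i) * (\<Sum>j\<le>i. (1 - s^Suc j) / Suc j)) \<le> Ib"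
proof -
  have s1: "s^Suc j \<le> 1" for j by (rule power_le_one[OF assms])
  show "0 \<le> (\<Sum>i<k. pk (Suc i) * (\<Sum>j\<le>i. (1 - s^Suc j) / Suc j))"
    using s1 pi_nn by (intro sum_nonneg mult_nonneg_nonneg divide_nonneg_nonneg) auto
  have "(\<Sum>i<k. pk (Suc i) * (\<Sum>j\<le>i. (1 - s^Suc j) / Suc j)) \<le> (\<Sum>i<k. pk (Suc i) * (1 + ln (real (Suc i))))"
  proof (intro sum_mono mult_left_mono pi_nn)
    fix i
    have "(\<Sum>j\<le>i. (1 - s^Suc j) / Suc j) \<le> (\<Sum>j\<le>i. 1 / real (Suc j))"
      using assms by (intro sum_mono divide_right_mono) auto
    then show "(\<Sum>j\<le>i. (1 - s^Suc j) / Suc j) \<le> 1 + ln (real (Suc i))" using harm_bound[of i] by linarith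
  qed
  then show "(\<Sum>i<k. pk (Suc i) * (\<Sum>j\<le>i. (1 - s^Suc j) / Suc j)) \<le> Ib" using Ib_bound[of k] by linarith
qed

definition "gS v = (if v < 1 then Sf pk v else 0)"

lemma gS_int:
  assumes "0 < s" "s \<le> 1"
  shows "gS integrable_on {s..1}" and "0 \<le> integral {s..1} gS" and "integral {s..1} gS \<le> Ib"
proof -
  define f where "f k v = (if v < 1 then Fk pk k v else 0)" for k v
  define val where "val k = (\<Sum>i<k. pk (Suc i) * (\<Sum>j\<le>i. (1 - s^Suc j) / Suc j))" for k
  have hi: "(f k has_integral val k) {s..1}" for k
    unfolding val_def by (rule has_integral_spike[OF negligible_sing[of 1] _ Fk_has_integral[OF assms(2)]])
       (auto simp: f_def val_def)
  have mc: "gS integrable_on {s..1} \<and> ((\<lambda>k. integral {s..1} (f k)) \<longlonglongrightarrow> integral {s..1} gS)"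
  proof (rule monotone_convergence_increasing)
    show "f k integrable_on {s..1}" for k using hi by blast
    show "f k x \<le> f (Suc k) x" if "x \<in> {s..1}" for k x
      using that assms pi_nn[of k] by (auto simp: f_def Fk_def intro!: mult_nonneg_nonneg sum_nonneg)
    show "(\<lambda>k. f k x) \<longlonglongrightarrow> gS x" if "x \<in> {s..1}" for x
    proof (cases "x < 1")
      case True
      have "summable (\<lambda>i. pk (Suc i) * (\<Sum>j\<le>i. x^j))" using S_sums[of x] True that assms
        by (auto intro: sums_summable)
      then show ?thesis using True by (simp add: f_def gS_def Fk_def Sf_def summable_LIMSEQ)
    qed (simp add: f_def gS_def)
    show "bounded (range (\<lambda>k. integral {s..1} (f k)))"
    proof -
      have "\<bar>integral {s..1} (f k)\<bar> \<le> Ib" for k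
        using integral_unique[OF hi[of k]] Fk_int_bound[of s k] assms unfolding val_def by auto
      then show ?thesis unfolding bounded_iff by auto
    qed
  qed
  then show "gS integrable_on {s..1}" by blast
  have "(\<lambda>k. integral {s..1} (f k)) = val" using hi by (auto intro!: ext integral_unique)
  then have lim: "(\<lambda>k. val k) \<longlonglongrightarrow> integral {s..1} gS" using mc by simp
  show "integral {s..1} gS \<le> Ib"
    by (rule LIMSEQ_le_const2[OF lim]) (use Fk_int_bound assms in \<open>auto simp: val_def\<close>)
  show "0 \<le> integral {s..1} gS"
    by (rule LIMSEQ_le_const[OF lim]) (use Fk_int_bound assms in \<open>auto simp: val_def\<close>)
qed


abbreviation "m \<equiv> mfun rho d c pk"
abbreviation "\<theta> \<equiv> theta rho d c pk"

lemma m_has_integral: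
  assumes "0 < s" "s \<le> 1"
  shows "((\<lambda>v. psi rho d pk v / (c * v * (1 - v))) has_integral (- (d/c) * ln s - integral {s..1} gS / c)) {s..1}"
proof -
  define F where "F v = d / c * ln v" for v
  have h1: "((\<lambda>v. d / (c * v)) has_integral (F 1 - F s)) {s..1}"
  proof (rule fundamental_theorem_of_calculus[OF assms(2)])
    fix x assume x: "x \<in> {s..1}"
    then have "0 < x" using assms by auto
    have "(F has_real_derivative d / c * inverse x) (at x within {s..1})"
      unfolding F_def[abs_def] by (rule DERIV_cmult[OF has_field_derivative_at_within[OF DERIV_ln[OF \<open>0 < x\<close>]]])
    then show "(F has_vector_derivative d / (c * x)) (at x within {s..1})"
      by (simp add: has_real_derivative_iff_has_vector_derivative divide_inverse mult.assoc)
  qed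
  have h2: "((\<lambda>v. gS v * (1 / c)) has_integral (integral {s..1} gS * (1 / c))) {s..1}"
    by (intro has_integral_mult_left integrable_integral gS_int(1) assms)
  have h3: "((\<lambda>v. d / (c * v) - gS v * (1 / c)) has_integral (F 1 - F s - integral {s..1} gS * (1 / c))) {s..1}"
    by (rule has_integral_diff[OF h1 h2])
  have h4: "((\<lambda>v. psi rho d pk v / (c * v * (1 - v))) has_integral (F 1 - F s - integral {s..1} gS * (1 / c))) {s..1}"
  proof (rule has_integral_spike[OF negligible_sing[of 1] _ h3])
    fix x assume "x \<in> {s..1} - {1}"
    then have x: "0 < x" "x < 1" using assms by auto
    show "psi rho d pk x / (c * x * (1 - x)) = d / (c * x) - gS x * (1 / c)"
      using f_eq[OF x] x by (simp add: gS_def)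
  qed
  then show ?thesis by (simp add: F_def)
qed

lemma fI_integrable: "0 < s \<Longrightarrow> s \<le> 1 \<Longrightarrow> (\<lambda>v. psi rho d pk v / (c * v * (1 - v))) integrable_on {s..1}"
  using m_has_integral by blast

lemma m_eq: "0 < s \<Longrightarrow> s \<le> 1 \<Longrightarrow> m s = - (d/c) * ln s - integral {s..1} gS / c"
  unfolding mfun_def using m_has_integral by (rule integral_unique)

lemma m_lower: "0 < s \<Longrightarrow> s \<le> 1 \<Longrightarrow> - (d/c) * ln s - Ib / c \<le> m s"
  using m_eq gS_int(3)[of s] c_pos by (simp add: divide_right_mono)

lemma m_lower0: "0 < s \<Longrightarrow> s \<le> 1 \<Longrightarrow> - Ib / c \<le> m s"
proof -
  assume s: "0 < s" "s \<le> 1"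
  have "ln s \<le> 0" using s by simp
  then have "d * ln s \<le> 0" using d_pos by (simp add: mult_nonneg_nonpos)
  then have "0 \<le> - (d/c) * ln s" using c_pos by (simp add: divide_nonpos_pos)
  then show ?thesis using m_lower[OF s] by linarith
qed

lemma m_cont: "0 < s \<Longrightarrow> s \<le> 1 \<Longrightarrow> continuous_on {s..1} m"
  unfolding mfun_def by (rule indefinite_integral_continuous_1'[OF fI_integrable])

lemma m_isCont: "0 < x \<Longrightarrow> x < 1 \<Longrightarrow> isCont m x"
proof -
  assume x: "0 < x" "x < 1"
  have "continuous_on {x/2..1} m" using x by (intro m_cont) auto
  moreover have "x \<in> interior {x/2..1}" using x by auto
  ultimately show ?thesis by (rule continuous_on_interior)
qed

lemma em_cont: "0 < s \<Longrightarrow> s \<le> 1 \<Longrightarrow> continuous_on {s..1} (\<lambda>v. exp (m v))"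
  using m_cont by (intro continuous_intros)

lemma em_int: "0 < s \<Longrightarrow> s \<le> 1 \<Longrightarrow> (\<lambda>v. exp (m v)) integrable_on {s..1}"
  using em_cont by (rule integrable_continuous_real)

lemma theta_cont: "0 < s \<Longrightarrow> s \<le> 1 \<Longrightarrow> continuous_on {s..1} \<theta>"
  unfolding theta_def[abs_def] by (rule indefinite_integral_continuous_1'[OF em_int])

lemma theta_1: "\<theta> 1 = 0"
  by (simp add: theta_def)

lemma theta_deriv:
  assumes x: "0 < x" "x < 1"
  shows "(\<theta> has_real_derivative - exp (m x)) (at x)"
proof -
  define s0 where "s0 = x / 2"
  have s0: "0 < s0" "s0 < x" "s0 \<le> 1" using x unfolding s0_def by auto
  have c: "continuous_on {s0..1} (\<lambda>v. exp (m v))" using em_cont s0 by auto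
  have "((\<lambda>y. integral {s0..y} (\<lambda>v. exp (m v))) has_vector_derivative exp (m x)) (at x within {s0..1})"
    by (rule integral_has_vector_derivative[OF c]) (use s0 x in auto)
  then have d1: "((\<lambda>y. integral {s0..y} (\<lambda>v. exp (m v))) has_real_derivative exp (m x)) (at x)"
    using s0 x by (simp add: has_real_derivative_iff_has_vector_derivative at_within_Icc_at)
  have d2: "((\<lambda>y. integral {s0..1} (\<lambda>v. exp (m v)) - integral {s0..y} (\<lambda>v. exp (m v))) has_real_derivative - exp (m x)) (at x)"
    using DERIV_diff[OF DERIV_const d1] by simp
  show ?thesis
  proof (rule has_field_derivative_transform_within_open[OF d2, of "{s0<..<1}"])
    show "open {s0<..<1}" by simp
    show "x \<in> {s0<..<1}" using s0 x by auto
    fix y assume y: "y \<in> {s0<..<1}"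
    have "integral {s0..y} (\<lambda>v. exp (m v)) + integral {y..1} (\<lambda>v. exp (m v)) = integral {s0..1} (\<lambda>v. exp (m v))"
      by (rule Henstock_Kurzweil_Integration.integral_combine) (use y s0 em_int in auto)
    then show "integral {s0..1} (\<lambda>v. exp (m v)) - integral {s0..y} (\<lambda>v. exp (m v)) = \<theta> y"
      by (simp add: theta_def)
  qed
qed

lemma theta_strict:
  assumes "0 < s" "s < s'" "s' \<le> 1"
  shows "\<theta> s' < \<theta> s"
proof -
  have "integral {s..s'} (\<lambda>v. exp (m v)) + integral {s'..1} (\<lambda>v. exp (m v)) = integral {s..1} (\<lambda>v. exp (m v))"
    by (rule Henstock_Kurzweil_Integration.integral_combine) (use assms em_int in auto)
  then have e: "\<theta> s = integral {s..s'} (\<lambda>v. exp (m v)) + \<theta> s'" by (simp add: theta_def)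
  have int: "(\<lambda>v. exp (m v)) integrable_on {s..s'}"
    by (rule integrable_subinterval_real[OF em_int[of s]]) (use assms in auto)
  have "(s' - s) * exp (- Ib / c) \<le> integral {s..s'} (\<lambda>v. exp (m v))"
  proof (rule has_integral_le[OF _ integrable_integral[OF int]])
    show "((\<lambda>v. exp (- Ib / c)) has_integral (s' - s) * exp (- Ib / c)) {s..s'}"
      using has_integral_const_real[of "exp (- Ib / c)" s s'] assms by simp
    fix x assume "x \<in> {s..s'}"
    then have "- Ib / c \<le> m x" using m_lower0 assms by auto
    then show "exp (- Ib / c) \<le> exp (m x)" by simp
  qed
  moreover have "0 < (s' - s) * exp (- Ib / c)" using assms by simp
  ultimately show ?thesis using e by linarith
qed

lemma theta_pos: "0 < s \<Longrightarrow> s < 1 \<Longrightarrow> 0 < \<theta> s"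
  using theta_strict[of s 1] theta_1 by simp

lemma theta_inj: "0 < s \<Longrightarrow> s \<le> 1 \<Longrightarrow> 0 < s' \<Longrightarrow> s' \<le> 1 \<Longrightarrow> \<theta> s = \<theta> s' \<Longrightarrow> s = s'"
  by (metis linorder_neqE_linordered_idom order_less_irrefl theta_strict)

lemma theta_nn:
  assumes "0 < s" "s \<le> 1"
  shows "(\<integral>\<^sup>+v. ennreal (indicator {s..1} v * exp (m v)) \<partial>lborel) = ennreal (\<theta> s)"
proof -
  have bm: "(\<lambda>v. indicator {s..1} v *\<^sub>R exp (m v)) \<in> borel_measurable borel"
    by (rule borel_measurable_continuous_on_indicator[OF _ em_cont[OF assms]]) auto
  have eq: "(\<lambda>v. indicator {s..1} v * exp (m v)) = (\<lambda>v. if v \<in> {s..1} then exp (m v) else 0)"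
    by (auto simp: indicator_def)
  have hi: "((\<lambda>v. indicator {s..1} v * exp (m v)) has_integral \<theta> s) UNIV"
    unfolding eq has_integral_restrict_UNIV theta_def using em_int[OF assms] by (rule integrable_integral)
  show ?thesis
    by (rule nn_integral_has_integral_lborel[OF _ _ hi]) (use bm in \<open>auto simp: indicator_def\<close>)
qed

lemma theta_le_xi: "0 < s \<Longrightarrow> s \<le> 1 \<Longrightarrow> ennreal (\<theta> s) \<le> xi rho d c pk"
  unfolding xi_def theta_nn[symmetric]
  by (intro nn_integral_mono ennreal_leI) (auto simp: indicator_def)

lemma xi_SUP: "xi rho d c pk = (SUP n. ennreal (\<theta> (1 / Suc n)))"
proof -
  define F where "F n v = ennreal (indicator {1 / Suc n..1} v * exp (m v))" for n v
  have inc: "incseq F"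
  proof (rule incseq_SucI, rule le_funI)
    fix n v
    have "1 / real (Suc (Suc n)) \<le> 1 / real (Suc n)" by (simp add: frac_le)
    then show "F n v \<le> F (Suc n) v" unfolding F_def by (intro ennreal_leI) (auto simp: indicator_def)
  qed
  have meas: "F n \<in> borel_measurable lborel" for n
  proof -
    have "(\<lambda>v. indicator {1 / Suc n..1} v *\<^sub>R exp (m v)) \<in> borel_measurable borel"
      by (rule borel_measurable_continuous_on_indicator[OF _ em_cont]) auto
    then show ?thesis unfolding F_def by simp
  qed
  have pw: "(SUP n. F n v) = ennreal (indicator {0<..1} v * exp (m v))" for v
  proof (rule antisym)
    show "(SUP n. F n v) \<le> ennreal (indicator {0<..1} v * exp (m v))"
    proof (rule SUP_least)
      fix n
      show "F n v \<le> ennreal (indicator {0<..1} v * exp (m v))"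
      proof (cases "v \<in> {1 / real (Suc n)..1}")
        case True
        have pos: "0 < 1 / real (Suc n)" by simp
        have "1 / real (Suc n) \<le> v" "v \<le> 1" using True by auto
        then have "0 < v" "v \<le> 1" using pos by linarith+
        then have "v \<in> {0<..1}" by simp
        then show ?thesis unfolding F_def using True by simp
      next
        case False
        then show ?thesis unfolding F_def by simp
      qed
    qed
    show "ennreal (indicator {0<..1} v * exp (m v)) \<le> (SUP n. F n v)"
    proof (cases "0 < v \<and> v \<le> 1")
      case True
      have "0 < v" using True by simp
      then obtain n where n0: "inverse (real (Suc n)) < v"
        using reals_Archimedean by blast
      then have n: "1 / real (Suc n) < v" by (simp add: inverse_eq_divide)
      have "ennreal (indicator {0<..1} v * exp (m v)) = F n v"
        unfolding F_def using True n by (simp add: indicator_def)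
      also have "\<dots> \<le> (SUP n. F n v)" by (rule SUP_upper) simp
      finally show ?thesis .
    next
      case False
      then have "indicator {0<..1} v = (0::real)" by (auto simp: indicator_def)
      then show ?thesis by simp
    qed
  qed
  have "xi rho d c pk = (\<integral>\<^sup>+v. (SUP n. F n v) \<partial>lborel)" unfolding xi_def pw ..
  also have "\<dots> = (SUP n. integral\<^sup>N lborel (F n))" by (rule nn_integral_monotone_convergence_SUP[OF inc meas])
  also have "\<dots> = (SUP n. ennreal (\<theta> (1 / Suc n)))"
    unfolding F_def by (subst theta_nn) auto
  finally show ?thesis .
qed


abbreviation "X \<equiv> xi rho d c pk"
abbreviation "D \<equiv> Dom rho d c pk"
abbreviation "\<phi> \<equiv> phi rho d c pk"

lemma theta_mono: "0 < s \<Longrightarrow> s \<le> s' \<Longrightarrow> s' \<le> 1 \<Longrightarrow> \<theta> s' \<le> \<theta> s"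
  using theta_strict[of s s'] by (cases "s = s'") auto

lemma theta_lt_xi: "0 < s \<Longrightarrow> s < 1 \<Longrightarrow> ennreal (\<theta> s) < X"
proof -
  assume s: "0 < s" "s < 1"
  have "\<theta> s < \<theta> (s/2)" using theta_strict[of "s/2" s] s by auto
  then have "ennreal (\<theta> s) < ennreal (\<theta> (s/2))" using theta_pos[of s] s by (simp add: ennreal_less_iff)
  also have "\<dots> \<le> X" using theta_le_xi[of "s/2"] s by auto
  finally show ?thesis .
qed

lemma theta_in_D: "0 < s \<Longrightarrow> s < 1 \<Longrightarrow> \<theta> s \<in> D"
  using theta_lt_xi theta_pos unfolding Dom_def by auto

lemma Dom_ex:
  assumes t: "t \<in> D"
  shows "\<exists>s. 0 < s \<and> s < 1 \<and> \<theta> s = t"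
proof -
  have t0: "0 < t" and tX: "ennreal t < X" using t unfolding Dom_def by auto
  then obtain n where n: "ennreal t < ennreal (\<theta> (1 / Suc n))"
    unfolding xi_SUP less_SUP_iff by blast
  then have tl: "t < \<theta> (1 / Suc n)" using t0 by (simp add: ennreal_less_iff)
  have a: "0 < 1 / real (Suc n)" "1 / real (Suc n) \<le> 1" by auto
  obtain s where s: "1 / real (Suc n) \<le> s" "s \<le> 1" "\<theta> s = t"
    using IVT2'[of \<theta> 1 t "1 / real (Suc n)"] theta_1 tl t0 a theta_cont[OF a] by auto
  have "s \<noteq> 1" using s(3) theta_1 t0 by auto
  moreover have "0 < s" using s(1) a(1) by linarith
  ultimately show ?thesis using s by (intro exI[of _ s]) auto
qed

lemma phi_theta: "0 < s \<Longrightarrow> s \<le> 1 \<Longrightarrow> \<phi> (\<theta> s) = s"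
  unfolding phi_def by (rule the_equality) (auto intro: theta_inj)

lemma phi_props:
  assumes t: "t \<in> D"
  shows "0 < \<phi> t" "\<phi> t < 1" "\<theta> (\<phi> t) = t"
proof -
  obtain s where s: "0 < s" "s < 1" "\<theta> s = t" using Dom_ex[OF t] by blast
  have "\<phi> t = s" using phi_theta[of s] s by simp
  then show "0 < \<phi> t" "\<phi> t < 1" "\<theta> (\<phi> t) = t" using s by auto
qed

lemma Dom_cases:
  "(X = top \<and> D = {0<..}) \<or> (\<exists>Xr>0. X = ennreal Xr \<and> D = {0<..<Xr})"
proof (cases X rule: ennreal_cases)
  case (real r)
  have "ennreal (\<theta> (1/2)) \<le> X" using theta_le_xi[of "1/2"] by simp
  then have "\<theta> (1/2) \<le> r" using real theta_pos[of "1/2"] by simp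
  then have "0 < r" using theta_pos[of "1/2"] by simp
  moreover have "D = {0<..<r}" unfolding Dom_def using real by (auto simp: ennreal_less_iff)
  ultimately show ?thesis using real by blast
next
  case top
  then show ?thesis unfolding Dom_def by auto
qed

lemma D_open: "open D"
  using Dom_cases by auto

lemma D_int: "is_interval D"
  using Dom_cases by (auto simp: is_interval_convex_1)

lemma ev_Dom:
  assumes T0: "T0 \<in> D"
  shows "eventually (\<lambda>T. T \<in> D \<and> T0 < T) (to_xi rho d c pk)"
  using Dom_cases
proof
  assume a: "X = top \<and> D = {0<..}"
  then have "to_xi rho d c pk = at_top" by (simp add: to_xi_def)
  moreover have "eventually (\<lambda>T. T \<in> D \<and> T0 < T) at_top"
    by (rule eventually_mono[OF eventually_gt_at_top[of T0]]) (use a T0 in auto)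
  ultimately show ?thesis by simp
next
  assume "\<exists>Xr>0. X = ennreal Xr \<and> D = {0<..<Xr}"
  then obtain Xr where a: "Xr > 0" "X = ennreal Xr" "D = {0<..<Xr}" by blast
  then have tx: "to_xi rho d c pk = at_left Xr" by (simp add: to_xi_def)
  have "T0 < Xr" using T0 a by auto
  then have ev: "eventually (\<lambda>T. T \<in> {T0<..<Xr}) (at_left Xr)" by (rule eventually_at_left_real)
  have "eventually (\<lambda>T. T \<in> D \<and> T0 < T) (at_left Xr)"
    by (rule eventually_mono[OF ev]) (use a T0 in auto)
  then show ?thesis using tx by simp
qed

lemma phi_isCont:
  assumes t: "t \<in> D"
  shows "isCont \<phi> t"
proof -
  define s where "s = \<phi> t"
  have s: "0 < s" "s < 1" "\<theta> s = t" using phi_props[OF t] unfolding s_def by auto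
  define e where "e = min (s/2) ((1 - s)/2)"
  have e: "0 < e" using s unfolding e_def by auto
  have "isCont \<phi> (\<theta> s)"
  proof (rule isCont_inverse_function[where f=\<theta> and g=\<phi> and x=s, OF e])
    fix z :: real assume ze: "\<bar>z - s\<bar> \<le> e"
    have z1: "0 < z" and z2: "z < 1" using aux_ival[of z s] ze s(1,2) unfolding e_def by auto
    note z = z1 z2
    show "\<phi> (\<theta> z) = z" using phi_theta z by simp
    show "isCont \<theta> z" using theta_deriv[OF z] by (rule DERIV_isCont)
  qed
  then show ?thesis using s by simp
qed

lemma phi_cont: "continuous_on D \<phi>"
  using phi_isCont by (simp add: continuous_at_imp_continuous_on)

lemma phi_deriv:
  assumes t: "t \<in> D"
  shows "(\<phi> has_real_derivative - exp (- m (\<phi> t))) (at t)"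
proof -
  define s where "s = \<phi> t"
  have s: "0 < s" "s < 1" "\<theta> s = t" using phi_props[OF t] unfolding s_def by auto
  define b where "b = \<theta> (s/2)"
  have tb: "t < b" unfolding b_def using theta_strict[of "s/2" s] s by auto
  have bX: "ennreal b < X" unfolding b_def using theta_lt_xi[of "s/2"] s by auto
  have "(\<phi> has_real_derivative inverse (- exp (m (\<phi> t)))) (at t)"
  proof (rule DERIV_inverse_function[where a=0 and b=b])
    show "(\<theta> has_real_derivative - exp (m (\<phi> t))) (at (\<phi> t))"
      using theta_deriv s unfolding s_def by auto
    show "- exp (m (\<phi> t)) \<noteq> 0" by simp
    show "0 < t" "t < b" using t tb unfolding Dom_def by auto
    fix y assume y: "0 < y" "y < b"
    have "ennreal y < ennreal b" using y by (simp add: ennreal_less_iff)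
    then have "y \<in> D" using y bX unfolding Dom_def by auto
    then show "\<theta> (\<phi> y) = y" using phi_props by auto
  next
    show "isCont \<phi> t" by (rule phi_isCont[OF t])
  qed
  then show ?thesis by (simp add: exp_minus)
qed

lemma r2:
  assumes t: "t \<in> D"
  shows "rfun rho d c pk t ^ 2 = exp (- m (\<phi> t)) ^ 2 / (c * \<phi> t * (1 - \<phi> t))"
proof -
  have "deriv \<phi> t = - exp (- m (\<phi> t))" using phi_deriv[OF t] by (rule DERIV_imp_deriv)
  moreover have "0 \<le> c * \<phi> t * (1 - \<phi> t)" using phi_props[OF t] c_pos by simp
  ultimately show ?thesis unfolding rfun_def by (simp add: power_divide)
qed

end


lemma alg1: "(w::real) \<noteq> 0 \<Longrightarrow> v \<noteq> 0 \<Longrightarrow> (a * (P / v) * w - P * (0 - 1)) / (w * w) = a * P / (v * w) + P / (w * w)"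
  by (simp add: field_simps)

context setting
begin

lemma p_pos: "0 < q \<Longrightarrow> t \<in> D \<Longrightarrow> 0 < q * rfun rho d c pk t ^ 2"
  using r2[of t] phi_props[of t] c_pos by simp

lemma p_cont: "continuous_on D (\<lambda>t. q * rfun rho d c pk t ^ 2)"
proof -
  have "isCont (\<lambda>t. q * (exp (- m (\<phi> t)) ^ 2 / (c * \<phi> t * (1 - \<phi> t)))) t" if t: "t \<in> D" for t
  proof -
    have c1: "isCont (\<lambda>t. m (\<phi> t)) t"
      by (rule isCont_o2[OF phi_isCont[OF t] m_isCont[OF phi_props(1,2)[OF t]]])
    have c2: "isCont \<phi> t" by (rule phi_isCont[OF t])
    have nz: "c * \<phi> t * (1 - \<phi> t) \<noteq> 0" using phi_props[OF t] c_pos by simp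
    show ?thesis using c1 c2 nz by (intro continuous_intros) auto
  qed
  then have "continuous_on D (\<lambda>t. q * (exp (- m (\<phi> t)) ^ 2 / (c * \<phi> t * (1 - \<phi> t))))"
    by (simp add: continuous_at_imp_continuous_on)
  then show ?thesis by (rule continuous_on_eq) (simp add: r2)
qed

definition "aa = d / c"
definition "KK = exp (Ib / c)"
definition "hq q t = q * KK / (c * aa) * (\<phi> t powr aa / (1 - \<phi> t))"

lemma aa_pos: "0 < aa" unfolding aa_def using d_pos c_pos by simp

lemma EK:
  assumes v: "0 < v" "v \<le> 1"
  shows "exp (- m v) \<le> KK * v powr aa"
proof -
  have "- (d/c) * ln v - Ib / c \<le> m v" by (rule m_lower[OF v])
  then have "- m v \<le> aa * ln v + Ib / c" unfolding aa_def by simp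
  then have "exp (- m v) \<le> exp (aa * ln v + Ib / c)" by simp
  also have "\<dots> = KK * v powr aa" unfolding KK_def using v by (simp add: powr_def exp_add)
  finally show ?thesis .
qed

lemma h_nonneg: "0 < q \<Longrightarrow> t \<in> D \<Longrightarrow> 0 \<le> hq q t"
  unfolding hq_def KK_def using aa_pos c_pos phi_props[of t] by simp

lemma h_deriv:
  assumes q: "0 < q" and t: "t \<in> D"
  shows "\<exists>h'. (hq q has_real_derivative h') (at t) \<and> h' \<le> - (q * rfun rho d c pk t ^ 2)"
proof -
  define v where "v = \<phi> t"
  have v: "0 < v" "v < 1" using phi_props[OF t] unfolding v_def by auto
  define P where "P = v powr aa"
  define E where "E = exp (- m v)"
  define Cc where "Cc = q * KK / (c * aa)"
  define G' where "G' = ((aa * v powr (aa - 1)) * (1 - v) - v powr aa * (0 - 1)) / ((1 - v) * (1 - v))"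
  have P0: "0 < P" unfolding P_def using v by simp
  have E0: "0 < E" unfolding E_def by simp
  have Cc0: "0 < Cc" unfolding Cc_def KK_def using q c_pos aa_pos by simp
  have dG: "((\<lambda>v. v powr aa / (1 - v)) has_real_derivative G') (at (\<phi> t))"
    unfolding G'_def v_def
    by (rule DERIV_divide[OF has_real_derivative_powr DERIV_diff[OF DERIV_const DERIV_ident]])
       (use v in \<open>auto simp: v_def\<close>)
  have dH: "(hq q has_real_derivative Cc * (G' * - exp (- m (\<phi> t)))) (at t)"
    unfolding hq_def[abs_def] Cc_def
    using DERIV_cmult[OF DERIV_chain2[OF dG phi_deriv[OF t]], of "q * KK / (c * aa)"] by simp
  have vpa: "v powr (aa - 1) = P / v" unfolding P_def using v by (simp add: powr_diff)
  have eqG: "G' = aa * P / (v * (1 - v)) + P / ((1 - v) * (1 - v))"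
  proof -
    have nz: "1 - v \<noteq> 0" "v \<noteq> 0" using v by auto
    show ?thesis unfolding G'_def vpa P_def[symmetric] using alg1[OF nz] by simp
  qed
  have G'low: "aa * P / (v * (1 - v)) \<le> G'"
    unfolding eqG using P0 v by simp
  have EKP: "E \<le> KK * P" unfolding E_def P_def using EK v by simp
  have s1: "Cc * (aa * P / (v * (1 - v))) * E \<le> Cc * G' * E"
    using G'low Cc0 E0 by (intro mult_right_mono mult_left_mono) auto
  have s2: "Cc * (aa * P / (v * (1 - v))) * E = q * (KK * P) * E / (c * v * (1 - v))"
    unfolding Cc_def using aa_pos c_pos v by (simp add: field_simps)
  have s3: "q * E * E / (c * v * (1 - v)) \<le> q * (KK * P) * E / (c * v * (1 - v))"
    using EKP q E0 c_pos v by (intro divide_right_mono mult_right_mono mult_left_mono) auto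
  have s4: "q * rfun rho d c pk t ^ 2 = q * E * E / (c * v * (1 - v))"
    using r2[OF t] unfolding E_def v_def by (simp add: power2_eq_square)
  have "Cc * (G' * - exp (- m (\<phi> t))) = - (Cc * G' * E)" unfolding E_def v_def by simp
  then have "Cc * (G' * - exp (- m (\<phi> t))) \<le> - (q * rfun rho d c pk t ^ 2)"
    using s1 s2 s3 s4 by linarith
  then show ?thesis using dH by blast
qed

lemma phi_lim: "filterlim \<phi> (at_right 0) (to_xi rho d c pk)"
proof -
  have T0: "\<theta> (1/2) \<in> D" by (rule theta_in_D) auto
  have evD: "eventually (\<lambda>T. T \<in> D) (to_xi rho d c pk)"
    using ev_Dom[OF T0] by (rule eventually_mono) simp
  have ev0: "eventually (\<lambda>T. \<phi> T \<in> {0<..} \<and> \<phi> T \<noteq> 0) (to_xi rho d c pk)"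
  proof (rule eventually_mono[OF evD])
    fix x assume "x \<in> D"
    then have "0 < \<phi> x" by (rule phi_props(1))
    then show "\<phi> x \<in> {0<..} \<and> \<phi> x \<noteq> 0" by simp
  qed
  have "(\<phi> \<longlongrightarrow> 0) (to_xi rho d c pk)"
  proof (rule order_tendstoI)
    fix a :: real assume "a < 0"
    show "eventually (\<lambda>T. a < \<phi> T) (to_xi rho d c pk)"
    proof (rule eventually_mono[OF evD])
      fix x assume "x \<in> D"
      then have "0 < \<phi> x" by (rule phi_props(1))
      then show "a < \<phi> x" using \<open>a < 0\<close> by simp
    qed
  next
    fix a :: real assume a: "0 < a"
    define e where "e = min a (1/2)"
    have e: "0 < e" "e < 1" "e \<le> a" unfolding e_def using a by auto
    have T1: "\<theta> e \<in> D" using theta_in_D e by auto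
    show "eventually (\<lambda>T. \<phi> T < a) (to_xi rho d c pk)"
    proof (rule eventually_mono[OF ev_Dom[OF T1]])
      fix T assume T: "T \<in> D \<and> \<theta> e < T"
      have pT: "0 < \<phi> T" "\<phi> T < 1" "\<theta> (\<phi> T) = T" using phi_props T by auto
      have "\<phi> T < e"
      proof (rule ccontr)
        assume "\<not> \<phi> T < e"
        then have "\<theta> (\<phi> T) \<le> \<theta> e" using theta_mono[of e "\<phi> T"] e pT by auto
        then show False using T pT by simp
      qed
      then show "\<phi> T < a" using e by simp
    qed
  qed
  then show ?thesis unfolding filterlim_at using ev0 by simp
qed

lemma h_lim: "(hq q \<longlongrightarrow> 0) (to_xi rho d c pk)"
proof -
  have G0: "((\<lambda>v. v powr aa / (1 - v)) \<longlongrightarrow> 0) (at_right 0)"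
    using aa_pos by real_asymp
  have "((\<lambda>t. \<phi> t powr aa / (1 - \<phi> t)) \<longlongrightarrow> 0) (to_xi rho d c pk)"
    by (rule filterlim_compose[OF G0 phi_lim])
  then have "((\<lambda>t. q * KK / (c * aa) * (\<phi> t powr aa / (1 - \<phi> t))) \<longlongrightarrow> q * KK / (c * aa) * 0) (to_xi rho d c pk)"
    by (intro tendsto_mult tendsto_const)
  then show ?thesis unfolding hq_def[abs_def] by simp
qed

end

theorem lemma4p3:
  fixes rho d c q :: real and pk :: "nat \<Rightarrow> real"
  assumes rho_pos: "rho > 0" and d_pos: "d > 0" and c_pos: "c > 0"
    and pi_nonneg: "\<And>k. k \<ge> 1 \<Longrightarrow> pk k \<ge> 0"
    and pi_sums: "(\<lambda>i. pk (Suc i)) sums rho"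
    and condL: "summable (\<lambda>i. pk (Suc i) * ln (real (Suc i)))"
    and q_pos: "q > 0"
  shows "(\<forall>T\<in>Dom rho d c pk. \<exists>y. riccati_sol rho d c pk q (Dom rho d c pk) y \<and> y T = 0)
    \<and> (\<forall>\<kappa> :: real \<Rightarrow> real \<Rightarrow> real.
         (\<forall>T\<in>Dom rho d c pk. riccati_sol rho d c pk q (Dom rho d c pk) (\<kappa> T) \<and> \<kappa> T T = 0) \<longrightarrow>
         (\<forall>T\<in>Dom rho d c pk. \<forall>T'\<in>Dom rho d c pk. \<forall>t\<in>Dom rho d c pk.
              T < T' \<longrightarrow> \<kappa> T t \<le> \<kappa> T' t)
       \<and> (\<exists>B :: real \<Rightarrow> real. \<forall>T\<in>Dom rho d c pk. \<forall>t\<in>Dom rho d c pk. \<kappa> T t \<le> B t)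
       \<and> (\<exists>w :: real \<Rightarrow> real.
            (\<forall>t\<in>Dom rho d c pk. ((\<lambda>T. \<kappa> T t) \<longlongrightarrow> w t) (to_xi rho d c pk))
          \<and> (\<forall>t\<in>Dom rho d c pk. w t > 0)
          \<and> (w \<longlongrightarrow> 0) (to_xi rho d c pk)))"
proof -
  interpret S: setting rho d c pk
    using rho_pos d_pos c_pos pi_nonneg pi_sums condL by unfold_locales auto
  define p where "p t = q * rfun rho d c pk t ^ 2" for t
  define Dm where "Dm = Dom rho d c pk"
  have ppos: "\<And>t. t \<in> Dm \<Longrightarrow> 0 < p t" unfolding p_def Dm_def using S.p_pos[OF q_pos] by blast
  have pcont: "continuous_on Dm p" unfolding p_def[abs_def] Dm_def by (rule S.p_cont)
  have Dopen: "open Dm" and Dint: "is_interval Dm" unfolding Dm_def by (rule S.D_open, rule S.D_int)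
  interpret R: ric_setup Dm p
    by unfold_locales (use Dopen Dint ppos in auto)
  have sol_iff: "riccati_sol rho d c pk q Dm y \<longleftrightarrow> R.sol y" for y
    unfolding riccati_sol_def R.sol_def p_def by simp
  have part1: "\<forall>T\<in>Dm. \<exists>y. riccati_sol rho d c pk q Dm y \<and> y T = 0"
  proof
    fix T assume T: "T \<in> Dm"
    interpret O: ode_setup Dm p T
      by unfold_locales (use Dopen Dint pcont ppos T in \<open>auto intro: less_imp_le\<close>)
    obtain y where y: "\<forall>t\<in>Dm. (y has_real_derivative (y t ^ 2 - p t)) (at t)" "y T = 0"
      using O.exists_riccati by blast
    then show "\<exists>y. riccati_sol rho d c pk q Dm y \<and> y T = 0"
      unfolding sol_iff R.sol_def by blast
  qed
  have part2: "(\<forall>T\<in>Dm. \<forall>T'\<in>Dm. \<forall>t\<in>Dm. T < T' \<longrightarrow> \<kappa> T t \<le> \<kappa> T' t)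
       \<and> (\<exists>B :: real \<Rightarrow> real. \<forall>T\<in>Dm. \<forall>t\<in>Dm. \<kappa> T t \<le> B t)
       \<and> (\<exists>w :: real \<Rightarrow> real.
            (\<forall>t\<in>Dm. ((\<lambda>T. \<kappa> T t) \<longlongrightarrow> w t) (to_xi rho d c pk))
          \<and> (\<forall>t\<in>Dm. w t > 0)
          \<and> (w \<longlongrightarrow> 0) (to_xi rho d c pk))"
    if H: "\<forall>T\<in>Dm. riccati_sol rho d c pk q Dm (\<kappa> T) \<and> \<kappa> T T = 0" for \<kappa> :: "real \<Rightarrow> real \<Rightarrow> real"
  proof -
    have sol: "R.sol (\<kappa> T)" "\<kappa> T T = 0" if "T \<in> Dm" for T using H that sol_iff by auto
    have mono: "\<kappa> T t \<le> \<kappa> T' t" if "T \<in> Dm" "T' \<in> Dm" "t \<in> Dm" "T < T'" for T T' t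
      using R.sol_compare[OF sol(1)[OF that(1)] sol(1)[OF that(2)] that(1) sol(2)[OF that(1)] that(2) sol(2)[OF that(2)] that(4) that(3)]
      by simp
    have hd: "\<exists>h'. (S.hq q has_real_derivative h') (at x) \<and> h' \<le> - p x" if "x \<in> Dm" for x
      using S.h_deriv[OF q_pos] that unfolding p_def Dm_def by blast
    have h0: "0 \<le> S.hq q x" if "x \<in> Dm" for x using S.h_nonneg[OF q_pos] that unfolding Dm_def by blast
    have bnd: "\<kappa> T t \<le> S.hq q t" if "T \<in> Dm" "t \<in> Dm" for T t
      by (rule R.sol_super[OF sol(1)[OF that(1)] that(1) sol(2)[OF that(1)] that(2) hd h0])
    have ne: "Dm \<noteq> {}" using S.theta_in_D[of "1/2"] unfolding Dm_def by auto
    have bdd: "bdd_above ((\<lambda>T. \<kappa> T t) ` Dm)" if "t \<in> Dm" for t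
      using bnd that by (intro bdd_aboveI2) auto
    define w where "w t = (SUP T\<in>Dm. \<kappa> T t)" for t
    have le_w: "\<kappa> T t \<le> w t" if "T \<in> Dm" "t \<in> Dm" for T t
      unfolding w_def using bdd[OF that(2)] that(1) by (rule cSUP_upper[rotated])
    have w_le: "w t \<le> S.hq q t" if "t \<in> Dm" for t
      unfolding w_def using ne bnd that by (intro cSUP_least) auto
    have evD: "eventually (\<lambda>T. T \<in> Dm \<and> T0 < T) (to_xi rho d c pk)" if "T0 \<in> Dm" for T0
      using S.ev_Dom that unfolding Dm_def by blast
    obtain T00 where T00: "T00 \<in> Dm" using ne by blast
    have lim: "((\<lambda>T. \<kappa> T t) \<longlongrightarrow> w t) (to_xi rho d c pk)" if t: "t \<in> Dm" for t
    proof (rule order_tendstoI)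
      fix a assume a: "a < w t"
      then obtain T0 where T0: "T0 \<in> Dm" "a < \<kappa> T0 t"
        unfolding w_def using less_cSUP_iff[OF ne bdd[OF t]] by blast
      show "eventually (\<lambda>T. a < \<kappa> T t) (to_xi rho d c pk)"
        by (rule eventually_mono[OF evD[OF T0(1)]]) (use mono T0 t in force)
    next
      fix a assume a: "w t < a"
      show "eventually (\<lambda>T. \<kappa> T t < a) (to_xi rho d c pk)"
        by (rule eventually_mono[OF evD[OF T00]]) (use le_w t a in force)
    qed
    have wpos: "0 < w t" if t: "t \<in> Dm" for t
    proof -
      obtain e where e: "e > 0" "ball t e \<subseteq> Dm" using Dopen t open_contains_ball by blast
      define T where "T = t + e / 2"
      have T: "T \<in> Dm" "t < T" unfolding T_def using e by (auto simp: dist_real_def intro!: subsetD[OF e(2)])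
      have "0 < \<kappa> T t" by (rule R.sol_sign(2)[OF sol(1)[OF T(1)] T(1) sol(2)[OF T(1)] t T(2)])
      then show ?thesis using le_w[OF T(1) t] by simp
    qed
    have w0: "(w \<longlongrightarrow> 0) (to_xi rho d c pk)"
    proof (rule tendsto_sandwich[OF _ _ tendsto_const S.h_lim[of q]])
      show "eventually (\<lambda>t. 0 \<le> w t) (to_xi rho d c pk)"
        by (rule eventually_mono[OF evD[OF T00]]) (use wpos in force)
      show "eventually (\<lambda>t. w t \<le> S.hq q t) (to_xi rho d c pk)"
        by (rule eventually_mono[OF evD[OF T00]]) (use w_le in force)
    qed
    show ?thesis
      using mono bnd lim wpos w0 by blast
  qed
  show ?thesis using part1 part2 unfolding Dm_def by blast
qed

end
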